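(* Let $\mathbf X=(X_1,\dots,X_r)$ have the UGAT distribution with parameters $n,k,\beta,\overline{\alpha}_r$, with hazard rate components $h_i$ as defined below. Abbreviate $M(\gamma)=M^{(r)}_n(\gamma;k;\overline{\alpha}_r)$, and for $\mathbf x,\mathbf t\in\mathbb N_0^r$ write $X_{\mathbf x}=x_1+\cdots+x_r$, $X'_{\mathbf x}=X_{\mathbf x}+1$ and $T_{\mathbf t}=t_1+\cdots+t_r$. Then the UGAT distribution is MIFR if and only if for all $\mathbf x,\mathbf t\in\mathbb N_0^r$ $$\frac{M(\beta+X'_{\mathbf x}+T_{\mathbf t})}{M(\beta+X_{\mathbf x}+T_{\mathbf t})}\le\frac{M(\beta+X'_{\mathbf x})}{M(\beta+X_{\mathbf x})},$$ and it is MDFR if and only if the reverse inequality $\ge$ holds for all $\mathbf x,\mathbf t\in\mathbb N_0^r$.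
   Context: Fix integers $r\ge1$, $n\ge0$, a real number $k$ with $rk>n$, a real $\beta>0$ and $\overline{\alpha}_r=(\alpha_0,\dots,\alpha_{r-1})\in(0,\infty)^r$. For $\gamma>0$ and a vector $\overline{\alpha}'=(\alpha'_0,\dots,\alpha'_{r-1})$ of positive reals define $$M^{(r)}_n(\gamma;k;\overline{\alpha}')=C\sum_{\ell_1,\dots,\ell_r=0}^{\infty}\frac{(\alpha'_0)^{\ell_1}(\alpha'_1)^{\ell_2}\cdots(\alpha'_{r-1})^{\ell_r}}{(\ell_1+\cdots+\ell_r+\gamma)^{rk-n}},\qquad C=\frac{(-1)^r2^{r(1-k)}n!}{(n-rk)!},$$ where $C$ is regarded as a fixed nonzero real constant not depending on $\gamma$ or $\overline{\alpha}'$, and the parameters are assumed to be such that all series involved converge (e.g. all $\alpha_j<1$). A random vector $\mathbf X=(X_1,\dots,X_r)$ with values in $\mathbb N_0^r$ has the UGAT distribution with parameters $n,k,\beta,\overline{\alpha}_r$ if for all $x_1,\dots,x_r\in\mathbb N_0$ $$P(X_1=x_1,\dots,X_r=x_r)=\frac{C\,\alpha_0^{x_1}\alpha_1^{x_2}\cdots\alpha_{r-1}^{x_r}}{(x_1+\cdots+x_r+\beta)^{rk-n}\,M^{(r)}_n(\beta;k;\overline{\alpha}_r)}.$$ With $R(x_1,\dots,x_r)=P(X_1\ge x_1,\dots,X_r\ge x_r)$, the hazard rate components are $h_i(\mathbf x)=1-R(x_1,\dots,x_i+1,\dots,x_r)/R(x_1,\dots,x_r)$, $i=1,\dots,r$.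 The distribution is MIFR (multivariate increasing failure rate) if $h_i(\mathbf x+\mathbf t)\ge h_i(\mathbf x)$ for all $i$ and all $\mathbf x,\mathbf t\in\mathbb N_0^r$, and MDFR (multivariate decreasing failure rate) if $h_i(\mathbf x+\mathbf t)\le h_i(\mathbf x)$ for all $i$ and all $\mathbf x,\mathbf t\in\mathbb N_0^r$. *)

theory Defs
  imports "HOL-Analysis.Analysis"
begin

text \<open>Vectors in N_0^r are modelled as nat^'r with r = CARD('r) (so r >= 1 automatically).
  The parameter vector (alpha_0,...,alpha_{r-1}) is a real^'r.  The constant C is a parameter.\<close>

definition vsum :: "nat^'r::finite \<Rightarrow> nat" where
  "vsum x = (\<Sum>j\<in>UNIV. x $ j)"

definition ugat_term :: "real \<Rightarrow> nat \<Rightarrow> real \<Rightarrow> real^'r::finite \<Rightarrow> nat^'r \<Rightarrow> real" where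
  "ugat_term k n \<gamma> \<alpha>' l =
     (\<Prod>j\<in>UNIV. (\<alpha>' $ j) ^ (l $ j)) / (real (vsum l) + \<gamma>) powr (real CARD('r) * k - real n)"

text \<open>M^{(r)}_n(gamma;k;alpha') including the constant C.\<close>
definition ugat_M :: "real \<Rightarrow> nat \<Rightarrow> real \<Rightarrow> real \<Rightarrow> real^'r::finite \<Rightarrow> real" where
  "ugat_M C n k \<gamma> \<alpha>' = C * (\<Sum>\<^sub>\<infinity>l\<in>(UNIV :: (nat^'r) set). ugat_term k n \<gamma> \<alpha>' l)"

definition ugat_pmf :: "real \<Rightarrow> nat \<Rightarrow> real \<Rightarrow> real \<Rightarrow> real^'r::finite \<Rightarrow> nat^'r \<Rightarrow> real" where
  "ugat_pmf C n k \<beta> \<alpha> x = C * ugat_term k n \<beta> \<alpha> x / ugat_M C n k \<beta> \<alpha>"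

definition ugat_R :: "real \<Rightarrow> nat \<Rightarrow> real \<Rightarrow> real \<Rightarrow> real^'r::finite \<Rightarrow> nat^'r \<Rightarrow> real" where
  "ugat_R C n k \<beta> \<alpha> x = (\<Sum>\<^sub>\<infinity>y\<in>{y. \<forall>j. x $ j \<le> y $ j}. ugat_pmf C n k \<beta> \<alpha> y)"

definition incr_at :: "'r::finite \<Rightarrow> nat^'r \<Rightarrow> nat^'r" where
  "incr_at i x = (\<chi> j. if j = i then x $ j + 1 else x $ j)"

definition ugat_h :: "real \<Rightarrow> nat \<Rightarrow> real \<Rightarrow> real \<Rightarrow> real^'r::finite \<Rightarrow> 'r \<Rightarrow> nat^'r \<Rightarrow> real" where
  "ugat_h C n k \<beta> \<alpha> i x = 1 - ugat_R C n k \<beta> \<alpha> (incr_at i x) / ugat_R C n k \<beta> \<alpha> x"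

definition MIFR :: "('r::finite \<Rightarrow> nat^'r \<Rightarrow> real) \<Rightarrow> bool" where
  "MIFR h \<longleftrightarrow> (\<forall>i x t. h i (x + t) \<ge> h i x)"

definition MDFR :: "('r::finite \<Rightarrow> nat^'r \<Rightarrow> real) \<Rightarrow> bool" where
  "MDFR h \<longleftrightarrow> (\<forall>i x t. h i (x + t) \<le> h i x)"

end

theory Submission
  imports Defs
begin

definition SS :: "real \<Rightarrow> nat \<Rightarrow> real \<Rightarrow> real^'r::finite \<Rightarrow> real" where
  "SS k n \<gamma> \<alpha> = (\<Sum>\<^sub>\<infinity>l\<in>(UNIV :: (nat^'r) set). ugat_term k n \<gamma> \<alpha> l)"

definition PP :: "real^'r::finite \<Rightarrow> nat^'r \<Rightarrow> real" where
  "PP \<alpha> x = (\<Prod>j\<in>UNIV. (\<alpha> $ j) ^ (x $ j))"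

lemma vsum_add: "vsum (x + t) = vsum x + vsum t"
  by (simp add: vsum_def sum.distrib)

lemma vsum_incr: "vsum (incr_at i x) = vsum x + 1"
proof -
  have "vsum (incr_at i x) = (\<Sum>j\<in>UNIV. x $ j + (if j = i then 1 else 0))"
    unfolding vsum_def incr_at_def by (intro sum.cong) auto
  also have "\<dots> = vsum x + 1" by (simp add: sum.distrib vsum_def)
  finally show ?thesis .
qed

lemma PP_incr: "PP \<alpha> (incr_at i x) = \<alpha> $ i * PP \<alpha> x"
proof -
  have "PP \<alpha> (incr_at i x) = (\<Prod>j\<in>UNIV. (\<alpha> $ j) ^ (x $ j) * (if j = i then \<alpha> $ j else 1))"
    unfolding PP_def incr_at_def by (intro prod.cong) auto
  also have "\<dots> = PP \<alpha> x * \<alpha> $ i" by (simp add: prod.distrib PP_def)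
  finally show ?thesis by simp
qed

lemma PP_pos: "\<forall>j. \<alpha> $ j > 0 \<Longrightarrow> PP \<alpha> x > 0"
  unfolding PP_def by (intro prod_pos) auto

lemma term_pos:
  assumes "\<forall>j. \<alpha> $ j > 0" "\<gamma> > 0"
  shows "ugat_term k n \<gamma> \<alpha> l > 0"
  unfolding ugat_term_def using assms by (intro divide_pos_pos prod_pos) auto

lemma SS_pos:
  assumes "\<forall>j. \<alpha> $ j > 0" "\<gamma> > 0" "ugat_term k n \<gamma> \<alpha> summable_on (UNIV :: (nat^'r::finite) set)"
  shows "SS k n \<gamma> (\<alpha>::real^'r) > 0"
proof -
  have "SS k n \<gamma> \<alpha> \<ge> 0" unfolding SS_def
    by (rule infsum_nonneg) (use term_pos[OF assms(1,2)] in \<open>auto intro: less_imp_le\<close>)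
  moreover have "SS k n \<gamma> \<alpha> \<noteq> 0"
  proof
    assume "SS k n \<gamma> \<alpha> = 0"
    hence "ugat_term k n \<gamma> \<alpha> 0 = 0"
      unfolding SS_def
      by (intro nonneg_infsum_le_0D[OF _ assms(3)]) (use term_pos[OF assms(1,2)] in \<open>auto intro: less_imp_le\<close>)
    thus False using term_pos[OF assms(1,2)] by (metis less_irrefl)
  qed
  ultimately show ?thesis by linarith
qed

lemma term_shift:
  "ugat_term k n \<beta> \<alpha> (x + l) = PP \<alpha> x * ugat_term k n (\<beta> + real (vsum x)) \<alpha> l"
proof -
  have "(\<Prod>j\<in>UNIV. (\<alpha> $ j) ^ ((x + l) $ j)) = PP \<alpha> x * (\<Prod>j\<in>UNIV. (\<alpha> $ j) ^ (l $ j))"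
    unfolding PP_def by (simp add: power_add prod.distrib)
  moreover have "real (vsum (x + l)) + \<beta> = real (vsum l) + (\<beta> + real (vsum x))"
    by (simp add: vsum_add)
  ultimately show ?thesis unfolding ugat_term_def by (simp add: add_ac)
qed

lemma R_formula:
  assumes "C \<noteq> 0"
  shows "ugat_R C n k \<beta> \<alpha> x = PP \<alpha> x * SS k n (\<beta> + real (vsum x)) \<alpha> / SS k n \<beta> \<alpha>"
proof -
  have pmf: "ugat_pmf C n k \<beta> \<alpha> y = ugat_term k n \<beta> \<alpha> y * (1 / SS k n \<beta> \<alpha>)" for y
    unfolding ugat_pmf_def ugat_M_def SS_def using assms by simp
  have "ugat_R C n k \<beta> \<alpha> x = (\<Sum>\<^sub>\<infinity>y\<in>{y. \<forall>j. x $ j \<le> y $ j}. ugat_term k n \<beta> \<alpha> y) * (1 / SS k n \<beta> \<alpha>)"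
    unfolding ugat_R_def pmf by (rule infsum_cmult_left')
  also have "(\<Sum>\<^sub>\<infinity>y\<in>{y. \<forall>j. x $ j \<le> y $ j}. ugat_term k n \<beta> \<alpha> y)
      = (\<Sum>\<^sub>\<infinity>l\<in>UNIV. ugat_term k n \<beta> \<alpha> (x + l))"
  proof (rule infsum_reindex_bij_witness[where i = "\<lambda>l. x + l" and j = "\<lambda>y. \<chi> j. y $ j - x $ j"])
    fix a :: "nat^'a" assume "a \<in> {y. \<forall>j. x $ j \<le> y $ j}"
    thus "x + (\<chi> j. a $ j - x $ j) = a" by (simp add: vec_eq_iff)
  next
    fix b :: "nat^'a"
    show "(\<chi> j. (x + b) $ j - x $ j) = b" by (simp add: vec_eq_iff)
    show "x + b \<in> {y. \<forall>j. x $ j \<le> y $ j}" by simp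
  next
    fix a :: "nat^'a" assume "a \<in> {y. \<forall>j. x $ j \<le> y $ j}"
    hence "x + (\<chi> j. a $ j - x $ j) = a" by (simp add: vec_eq_iff)
    thus "ugat_term k n \<beta> \<alpha> (x + (\<chi> j. a $ j - x $ j)) = ugat_term k n \<beta> \<alpha> a" by simp
  qed auto
  also have "\<dots> = PP \<alpha> x * SS k n (\<beta> + real (vsum x)) \<alpha>"
    unfolding term_shift SS_def by (rule infsum_cmult_right')
  finally show ?thesis by simp
qed

lemma h_formula:
  assumes "C \<noteq> 0" "\<beta> > 0" "\<forall>j. \<alpha> $ j > 0"
    "\<forall>\<gamma>>0. ugat_term k n \<gamma> \<alpha> summable_on (UNIV :: (nat^'r::finite) set)"
  shows "ugat_h C n k \<beta> (\<alpha>::real^'r) i x = 1 - \<alpha> $ i * (SS k n (\<beta> + real (vsum x + 1)) \<alpha> / SS k n (\<beta> + real (vsum x)) \<alpha>)"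
proof -
  have p: "PP \<alpha> x > 0" using PP_pos assms by blast
  have s0: "SS k n \<beta> \<alpha> > 0" using SS_pos assms by blast
  have s1: "SS k n (\<beta> + real (vsum x)) \<alpha> > 0" using SS_pos[of \<alpha> "\<beta> + real (vsum x)"] assms by auto
  show ?thesis
    unfolding ugat_h_def R_formula[OF assms(1)] PP_incr vsum_incr
    using p s0 s1 by (simp add: field_simps)
qed

lemma M_ratio:
  assumes "C \<noteq> 0"
  shows "ugat_M C n k a \<alpha> / ugat_M C n k b \<alpha> = SS k n a \<alpha> / SS k n b \<alpha>"
  unfolding ugat_M_def SS_def using assms by simp

theorem mainTheorem10:
  fixes C k \<beta> :: real and n :: nat and \<alpha> :: "real^'r::finite"
  assumes "C \<noteq> 0"
    and "real CARD('r) * k > real n"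
    and "\<beta> > 0"
    and "\<forall>j. \<alpha> $ j > 0"
    and "\<forall>\<gamma>>0. ugat_term k n \<gamma> \<alpha> summable_on (UNIV :: (nat^'r) set)"
  shows "(MIFR (ugat_h C n k \<beta> \<alpha>) \<longleftrightarrow>
            (\<forall>(x::nat^'r) (t::nat^'r).
               ugat_M C n k (\<beta> + real (vsum x + 1 + vsum t)) \<alpha> / ugat_M C n k (\<beta> + real (vsum x + vsum t)) \<alpha>
               \<le> ugat_M C n k (\<beta> + real (vsum x + 1)) \<alpha> / ugat_M C n k (\<beta> + real (vsum x)) \<alpha>))
       \<and> (MDFR (ugat_h C n k \<beta> \<alpha>) \<longleftrightarrow>
            (\<forall>(x::nat^'r) (t::nat^'r).
               ugat_M C n k (\<beta> + real (vsum x + 1 + vsum t)) \<alpha> / ugat_M C n k (\<beta> + real (vsum x + vsum t)) \<alpha>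
               \<ge> ugat_M C n k (\<beta> + real (vsum x + 1)) \<alpha> / ugat_M C n k (\<beta> + real (vsum x)) \<alpha>))"
proof -
  define Q where "Q m = SS k n (\<beta> + real (m + 1)) \<alpha> / SS k n (\<beta> + real m) \<alpha>" for m :: nat
  have h: "ugat_h C n k \<beta> \<alpha> i x = 1 - \<alpha> $ i * Q (vsum x)" for i x
    unfolding Q_def using h_formula[OF assms(1,3,4,5)] by simp
  have r1: "ugat_M C n k (\<beta> + real (vsum x + 1 + vsum t)) \<alpha> / ugat_M C n k (\<beta> + real (vsum x + vsum t)) \<alpha>
     = Q (vsum x + vsum t)" for x t :: "nat^'r"
    unfolding M_ratio[OF assms(1)] Q_def by (simp add: add_ac)
  have r2: "ugat_M C n k (\<beta> + real (vsum x + 1)) \<alpha> / ugat_M C n k (\<beta> + real (vsum x)) \<alpha>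
     = Q (vsum x)" for x :: "nat^'r"
    unfolding M_ratio[OF assms(1)] Q_def by simp
  obtain i0 :: 'r where True by blast
  have a0: "\<alpha> $ i0 > 0" using assms(4) by blast
  show ?thesis
    unfolding MIFR_def MDFR_def h r1 r2 vsum_add
  proof (intro conjI iffI allI)
    fix x t :: "nat^'r"
    assume "\<forall>(i::'r) (x::nat^'r) (t::nat^'r). 1 - \<alpha> $ i * Q (vsum x) \<le> 1 - \<alpha> $ i * Q (vsum x + vsum t)"
    from this[rule_format, of i0 x t] have "\<alpha> $ i0 * Q (vsum x + vsum t) \<le> \<alpha> $ i0 * Q (vsum x)" by linarith
    thus "Q (vsum x + vsum t) \<le> Q (vsum x)" using a0 by simp
  next
    fix i and x t :: "nat^'r"
    assume "\<forall>(x::nat^'r) (t::nat^'r). Q (vsum x + vsum t) \<le> Q (vsum x)"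
    hence "Q (vsum x + vsum t) \<le> Q (vsum x)" by blast
    thus "1 - \<alpha> $ i * Q (vsum x) \<le> 1 - \<alpha> $ i * Q (vsum x + vsum t)"
      using assms(4) by (simp add: mult_left_mono)
  next
    fix x t :: "nat^'r"
    assume "\<forall>(i::'r) (x::nat^'r) (t::nat^'r). 1 - \<alpha> $ i * Q (vsum x + vsum t) \<le> 1 - \<alpha> $ i * Q (vsum x)"
    from this[rule_format, of i0 x t] have "\<alpha> $ i0 * Q (vsum x) \<le> \<alpha> $ i0 * Q (vsum x + vsum t)" by linarith
    thus "Q (vsum x) \<le> Q (vsum x + vsum t)" using a0 by simp
  next
    fix i and x t :: "nat^'r"
    assume "\<forall>(x::nat^'r) (t::nat^'r). Q (vsum x) \<le> Q (vsum x + vsum t)"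
    hence "Q (vsum x) \<le> Q (vsum x + vsum t)" by blast
    thus "1 - \<alpha> $ i * Q (vsum x + vsum t) \<le> 1 - \<alpha> $ i * Q (vsum x)"
      using assms(4) by (simp add: mult_left_mono)
  qed
qed

end
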